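(* Let $G=(V,E)$ be a directed graph and $K\subset V$ a set of $|K|=k$ terminals. Then there exists a reachability-preserving minor $H$ of $G$ whose number of non-terminal vertices $|V(H)\setminus K|$ is $O(k^{3})$.
   Context: A $k$-terminal digraph is a digraph $G=(V,E)$ with a designated terminal set $K\subset V$, $|K|=k$. A minor of a digraph $G$ is any digraph obtained from $G$ by a sequence of vertex deletions, edge deletions and edge contractions (contracting a directed edge $(u,v)$ identifies $u$ and $v$ into one vertex, discarding loops), where terminals are never deleted and no contraction identifies two terminals (a vertex obtained by merging a terminal with non-terminals is identified with that terminal). A digraph $H$ with $K\subseteq V(H)$ is a reachability-preserving minor (RPM) of $G$ if $H$ is a minor of $G$ and for all $x,x'\in K$ there is a directed path from $x$ to $x'$ in $H$ if and only if there is one in $G$. The size of $H$ is $|V(H)\setminus K|$. *)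

theory Defs
  imports Main
begin

text \<open>A digraph is a pair (V, E) of a vertex set and an edge set E \<subseteq> V \<times> V.
  Vertices are natural numbers (any finite digraph can be relabelled this way).\<close>

type_synonym digraph = "nat set \<times> (nat \<times> nat) set"

definition wf_digraph :: "digraph \<Rightarrow> bool" where
  "wf_digraph G \<longleftrightarrow> finite (fst G) \<and> snd G \<subseteq> fst G \<times> fst G"

definition contract :: "nat set \<Rightarrow> nat \<Rightarrow> nat \<Rightarrow> digraph \<Rightarrow> digraph" where
  "contract K u v G =
    (let w = (if v \<in> K then v else u); r = (if v \<in> K then u else v);
         f = (\<lambda>x. if x = r then w else x)
     in (fst G - {r}, {(f a, f b) | a b. (a, b) \<in> snd G \<and> f a \<noteq> f b}))"

inductive minor_step :: "nat set \<Rightarrow> digraph \<Rightarrow> digraph \<Rightarrow> bool" for K where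
  del_vertex: "v \<in> fst G \<Longrightarrow> v \<notin> K \<Longrightarrow>
     minor_step K G (fst G - {v}, {e \<in> snd G. fst e \<noteq> v \<and> snd e \<noteq> v})"
| del_edge: "e \<in> snd G \<Longrightarrow> minor_step K G (fst G, snd G - {e})"
| contract_edge: "(u, v) \<in> snd G \<Longrightarrow> u \<noteq> v \<Longrightarrow> \<not> (u \<in> K \<and> v \<in> K) \<Longrightarrow>
     minor_step K G (contract K u v G)"

definition is_minor :: "nat set \<Rightarrow> digraph \<Rightarrow> digraph \<Rightarrow> bool" where
  "is_minor K H G \<longleftrightarrow> (minor_step K)\<^sup>*\<^sup>* G H"

definition reach :: "digraph \<Rightarrow> nat \<Rightarrow> nat \<Rightarrow> bool" where
  "reach G x y \<longleftrightarrow> (x, y) \<in> (snd G)\<^sup>*"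

definition is_RPM :: "nat set \<Rightarrow> digraph \<Rightarrow> digraph \<Rightarrow> bool" where
  "is_RPM K H G \<longleftrightarrow> is_minor K H G \<and> K \<subseteq> fst H \<and>
     (\<forall>x\<in>K. \<forall>x'\<in>K. reach H x x' \<longleftrightarrow> reach G x x')"

definition RPM_size :: "nat set \<Rightarrow> digraph \<Rightarrow> nat" where
  "RPM_size K H = card (fst H - K)"

end

theory Submission
  imports Defs
begin

lemma decomp:
  assumes "(x,y) \<in> E\<^sup>*" "(x,y) \<notin> (E - {(a,b)})\<^sup>*"
  shows "(x,a) \<in> E\<^sup>* \<and> (b,y) \<in> E\<^sup>*"
  using assms
proof (induction y rule: rtrancl_induct)
  case base then show ?case by simp
next
  case (step y z)
  show ?case
  proof (cases "(x,y) \<in> (E - {(a,b)})\<^sup>*")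
    case True
    then have "(y,z) = (a,b)" using step(2,4)
      by (metis DiffI rtrancl.rtrancl_into_rtrancl singletonD)
    then show ?thesis using step(1) by auto
  next
    case False
    then show ?thesis using step by (meson rtrancl.rtrancl_into_rtrancl)
  qed
qed

lemma img_fwd:
  "(p,q) \<in> E\<^sup>* \<Longrightarrow> (f p, f q) \<in> {(f a, f b)|a b. (a,b)\<in>E \<and> f a \<noteq> f b}\<^sup>*"
proof (induction q rule: rtrancl_induct)
  case base then show ?case by simp
next
  case (step y z)
  show ?case
  proof (cases "f y = f z")
    case True then show ?thesis using step by simp
  next
    case False
    then have "(f y, f z) \<in> {(f a, f b)|a b. (a,b)\<in>E \<and> f a \<noteq> f b}" using step by blast
    then show ?thesis using step by (meson rtrancl.rtrancl_into_rtrancl)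
  qed
qed

lemma img_bwd:
  assumes eq: "\<And>p q. f p = f q \<Longrightarrow> (p,q) \<in> R\<^sup>*" and ER: "E \<subseteq> R"
    and r: "(f x, z) \<in> {(f a, f b)|a b. (a,b)\<in>E \<and> f a \<noteq> f b}\<^sup>*" and fy: "f y = z"
  shows "(x,y) \<in> R\<^sup>*"
  using r fy
proof (induction z arbitrary: y rule: rtrancl_induct)
  case base then show ?case using eq[of x y] by simp
next
  case (step z z2)
  then obtain a b where ab: "z = f a" "z2 = f b" "(a,b) \<in> E" by blast
  have "(x,a) \<in> R\<^sup>*" using step.IH ab(1) by blast
  moreover have "(a,b) \<in> R" using ab ER by blast
  moreover have "(b,y) \<in> R\<^sup>*" using eq[of b y] step.prems ab(2) by simp
  ultimately show ?case by (meson rtrancl.rtrancl_into_rtrancl rtrancl_trans)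
qed

lemma indeg1:
  assumes "(x,y) \<in> (insert (v,u) E)\<^sup>*" "x \<noteq> v" "\<And>c. (c,v)\<in>E \<Longrightarrow> c = u"
  shows "(x,y) \<in> E\<^sup>*"
  using assms(1)
proof (induction y rule: rtrancl_induct)
  case base then show ?case by simp
next
  case (step y z)
  show ?case
  proof (cases "(y,z) \<in> E")
    case True then show ?thesis using step by (meson rtrancl.rtrancl_into_rtrancl)
  next
    case False
    then have yz: "y = v" "z = u" using step by auto
    have "(x,v) \<in> E\<^sup>*" using step.IH yz by simp
    then obtain c where "(x,c) \<in> E\<^sup>*" "(c,v) \<in> E" using assms(2)
      by (auto elim: rtranclE)
    then show ?thesis using yz assms(3) by auto
  qed
qed

lemma noin:
  assumes "(x,y) \<in> E\<^sup>*" "x \<noteq> v" "\<And>c. (c,v) \<notin> E"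
  shows "(x,y) \<in> {e\<in>E. fst e \<noteq> v \<and> snd e \<noteq> v}\<^sup>* \<and> y \<noteq> v"
  using assms(1)
proof (induction y rule: rtrancl_induct)
  case base then show ?case using assms by simp
next
  case (step y z)
  have zv: "z \<noteq> v" using step(2) assms(3) by blast
  have "(y,z) \<in> {e\<in>E. fst e \<noteq> v \<and> snd e \<noteq> v}" using step.IH step(2) zv by auto
  then show ?case using step.IH zv by (meson rtrancl.rtrancl_into_rtrancl)
qed

lemma loop_free: "(x,y)\<in>E\<^sup>* \<Longrightarrow> (x,y) \<in> (E - {(z,z)})\<^sup>*"
proof (induction y rule: rtrancl_induct)
  case base then show ?case by simp
next
  case (step y z')
  then show ?case
    by (cases "y = z'") (auto intro: rtrancl.rtrancl_into_rtrancl)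
qed

lemma img_card:
  assumes "finite E"
  shows "card {(f p, f q)|p q. (p,q)\<in>E \<and> f p \<noteq> f q} \<le> card E"
proof -
  have "{(f p, f q)|p q. (p,q)\<in>E \<and> f p \<noteq> f q} \<subseteq> (\<lambda>(p,q). (f p, f q)) ` E" by force
  then show ?thesis using assms card_image_le card_mono
    by (metis (no_types, lifting) finite_imageI le_trans)
qed

lemma step_wf:
  assumes "minor_step K G H" "wf_digraph G"
  shows "wf_digraph H"
  using assms
proof cases
  case (del_vertex v) then show ?thesis using assms(2) by (auto simp: wf_digraph_def)
next
  case (del_edge e) then show ?thesis using assms(2) by (auto simp: wf_digraph_def)
next
  case (contract_edge u v)
  then show ?thesis using assms(2) by (auto simp: wf_digraph_def contract_def Let_def)
qed


definition sz :: "digraph \<Rightarrow> nat" where "sz H = card (fst H) + card (snd H)"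

locale minH =
  fixes K :: "nat set" and H :: digraph
  assumes wf: "wf_digraph H" and KH: "K \<subseteq> fst H"
  and min: "\<And>H'. minor_step K H H' \<Longrightarrow> K \<subseteq> fst H' \<Longrightarrow>
      (\<forall>x\<in>K. \<forall>y\<in>K. reach H' x y \<longleftrightarrow> reach H x y) \<Longrightarrow> sz H \<le> sz H'"
begin

lemma finV: "finite (fst H)" using wf by (simp add: wf_digraph_def)
lemma EV: "snd H \<subseteq> fst H \<times> fst H" using wf by (simp add: wf_digraph_def)
lemma finE: "finite (snd H)" using finV EV finite_subset by blast

lemma essential:
  assumes e: "e \<in> snd H"
  shows "\<exists>s\<in>K. \<exists>t\<in>K. (s,t) \<in> (snd H)\<^sup>* \<and> (s,t) \<notin> (snd H - {e})\<^sup>*"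
proof (rule ccontr)
  assume n: "\<not> ?thesis"
  let ?H' = "(fst H, snd H - {e})"
  have st: "minor_step K H ?H'" using minor_step.del_edge[OF e] by simp
  have "sz H \<le> sz ?H'"
  proof (rule min[OF st])
    show "K \<subseteq> fst ?H'" using KH by simp
    show "\<forall>x\<in>K. \<forall>y\<in>K. reach ?H' x y \<longleftrightarrow> reach H x y"
      using n unfolding reach_def by (auto intro: rtrancl_mono[THEN subsetD, rotated])
  qed
  moreover have "sz ?H' < sz H" using card_Diff1_less[OF finE e] by (simp only: sz_def fst_conv snd_conv)
  ultimately show False by simp
qed

lemma contract_eq:
  assumes "v \<notin> K"
  shows "contract K a v H = (fst H - {v},
     {((\<lambda>x. if x = v then a else x) p, (\<lambda>x. if x = v then a else x) q)|p q. (p,q)\<in>snd H \<and>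
        (\<lambda>x. if x = v then a else x) p \<noteq> (\<lambda>x. if x = v then a else x) q})"
  using assms by (simp add: contract_def)

lemma contract_ok:
  assumes av: "(a,v) \<in> snd H" and vK: "v \<notin> K" and anv: "a \<noteq> v"
    and bk: "\<And>x y. x \<in> K \<Longrightarrow> y \<in> K \<Longrightarrow> (x,y) \<in> (insert (v,a) (snd H))\<^sup>* \<Longrightarrow> (x,y) \<in> (snd H)\<^sup>*"
  shows False
proof -
  define f where "f = (\<lambda>x::nat. if x = v then a else x)"
  let ?E' = "{(f p, f q)|p q. (p,q)\<in>snd H \<and> f p \<noteq> f q}"
  have ceq: "contract K a v H = (fst H - {v}, ?E')" using contract_eq[OF vK] by (simp add: f_def)
  have st: "minor_step K H (fst H - {v}, ?E')"
    using minor_step.contract_edge[where K=K, OF av anv] vK ceq by simp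
  have "sz H \<le> sz (fst H - {v}, ?E')"
  proof (rule min[OF st])
    show "K \<subseteq> fst (fst H - {v}, ?E')" using KH vK by auto
    show "\<forall>x\<in>K. \<forall>y\<in>K. reach (fst H - {v}, ?E') x y \<longleftrightarrow> reach H x y"
    proof (intro ballI)
      fix x y assume xK: "x \<in> K" and yK: "y \<in> K"
      have fx: "f x = x" "f y = y" using xK yK vK by (auto simp: f_def)
      show "reach (fst H - {v}, ?E') x y \<longleftrightarrow> reach H x y"
        unfolding reach_def snd_conv
      proof
        assume "(x,y) \<in> ?E'\<^sup>*"
        then have "(f x, f y) \<in> ?E'\<^sup>*" using fx by simp
        moreover have eqv: "\<And>p q. f p = f q \<Longrightarrow> (p,q) \<in> (insert (v,a) (snd H))\<^sup>*"
        proof -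
          fix p q assume "f p = f q"
          then have "p = q \<or> (p = v \<and> q = a) \<or> (p = a \<and> q = v)"
            by (auto simp: f_def split: if_splits)
          then show "(p,q) \<in> (insert (v,a) (snd H))\<^sup>*" using av by auto
        qed
        ultimately have "(x,y) \<in> (insert (v,a) (snd H))\<^sup>*"
          using img_bwd[where R="insert (v,a) (snd H)" and f=f and E="snd H" and x=x and y=y]
          by blast
        then show "(x,y) \<in> (snd H)\<^sup>*" using bk xK yK by blast
      next
        assume "(x,y) \<in> (snd H)\<^sup>*"
        then show "(x,y) \<in> ?E'\<^sup>*" using img_fwd[of x y "snd H" f] fx by simp
      qed
    qed
  qed
  moreover have "sz (fst H - {v}, ?E') < sz H"
  proof -
    have "v \<in> fst H" using av EV by auto
    then have "card (fst H - {v}) < card (fst H)" using card_Diff1_less[OF finV] by blast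
    moreover have "card ?E' \<le> card (snd H)" using img_card[OF finE] .
    ultimately show ?thesis by (simp add: sz_def)
  qed
  ultimately show False by simp
qed

lemma no_back:
  assumes "(a,v) \<in> snd H" "v \<notin> K" "a \<noteq> v" "(v,a) \<in> (snd H)\<^sup>*"
  shows False
proof (rule contract_ok[OF assms(1-3)])
  fix x y assume "(x,y) \<in> (insert (v,a) (snd H))\<^sup>*"
  moreover have "insert (v,a) (snd H) \<subseteq> (snd H)\<^sup>*" using assms(4) by auto
  ultimately show "(x,y) \<in> (snd H)\<^sup>*"
    using rtrancl_subset_rtrancl by blast
qed

lemma indeg2:
  assumes vV: "v \<in> fst H" and vK: "v \<notin> K"
  shows "\<exists>a b. a \<noteq> b \<and> (a,v) \<in> snd H \<and> (b,v) \<in> snd H"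
proof (rule ccontr)
  assume n: "\<not> ?thesis"
  show False
  proof (cases "\<exists>a. (a,v) \<in> snd H")
    case True
    then obtain a where av: "(a,v) \<in> snd H" by blast
    have uniq: "\<And>c. (c,v) \<in> snd H \<Longrightarrow> c = a" using n av by blast
    have anv: "a \<noteq> v"
    proof
      assume "a = v"
      then obtain s t where "s \<in> K" "t \<in> K" "(s,t) \<in> (snd H)\<^sup>*" "(s,t) \<notin> (snd H - {(v,v)})\<^sup>*"
        using essential[OF av] by blast
      then show False using loop_free[of s t "snd H" v] by blast
    qed
    show False
    proof (rule contract_ok[OF av vK anv])
      fix x y assume xK: "x \<in> K" and r: "(x,y) \<in> (insert (v,a) (snd H))\<^sup>*"
      have "x \<noteq> v" using xK vK by blast
      then show "(x,y) \<in> (snd H)\<^sup>*" using indeg1[OF r _ uniq] by blast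
    qed
  next
    case False
    let ?H' = "(fst H - {v}, {e \<in> snd H. fst e \<noteq> v \<and> snd e \<noteq> v})"
    have st: "minor_step K H ?H'" using minor_step.del_vertex[OF vV vK] by simp
    have "sz H \<le> sz ?H'"
    proof (rule min[OF st])
      show "K \<subseteq> fst ?H'" using KH vK by auto
      show "\<forall>x\<in>K. \<forall>y\<in>K. reach ?H' x y \<longleftrightarrow> reach H x y"
      proof (intro ballI)
        fix x y assume xK: "x \<in> K" and yK: "y \<in> K"
        show "reach ?H' x y \<longleftrightarrow> reach H x y"
          unfolding reach_def snd_conv
        proof
          assume "(x,y) \<in> {e \<in> snd H. fst e \<noteq> v \<and> snd e \<noteq> v}\<^sup>*"
          then show "(x,y) \<in> (snd H)\<^sup>*" by (rule rtrancl_mono[THEN subsetD, rotated]) auto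
        next
          assume "(x,y) \<in> (snd H)\<^sup>*"
          then show "(x,y) \<in> {e \<in> snd H. fst e \<noteq> v \<and> snd e \<noteq> v}\<^sup>*"
          proof -
            have "x \<noteq> v" using xK vK by blast
            moreover have "\<And>c. (c,v) \<notin> snd H" using False by blast
            ultimately show ?thesis using noin[of x y "snd H" v] \<open>(x,y) \<in> (snd H)\<^sup>*\<close> by blast
          qed
        qed
      qed
    qed
    moreover have "sz ?H' < sz H"
    proof -
      have "card (fst H - {v}) < card (fst H)" using card_Diff1_less[OF finV vV] .
      moreover have "card {e \<in> snd H. fst e \<noteq> v \<and> snd e \<noteq> v} \<le> card (snd H)"
        using finE by (intro card_mono) auto
      ultimately show ?thesis by (simp add: sz_def)
    qed
    ultimately show False by simp
  qed
qed


lemma charge: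
  assumes vV: "v \<in> fst H" and vK: "v \<notin> K"
  shows "\<exists>tr\<in>K\<times>K\<times>K. \<exists>a. (a,v) \<in> snd H \<and> (fst tr, snd (snd tr)) \<in> (snd H)\<^sup>* \<and>
     (fst tr, snd (snd tr)) \<notin> (snd H - {(a,v)})\<^sup>* \<and> (fst (snd tr), v) \<in> (snd H)\<^sup>* \<and>
     (fst (snd tr), a) \<notin> (snd H)\<^sup>*"
proof -
  obtain a b where ab: "a \<noteq> b" "(a,v) \<in> snd H" "(b,v) \<in> snd H" using indeg2[OF vV vK] by blast
  obtain s1 t1 where s1: "s1 \<in> K" "t1 \<in> K" "(s1,t1) \<in> (snd H)\<^sup>*" "(s1,t1) \<notin> (snd H - {(a,v)})\<^sup>*"
    using essential[OF ab(2)] by blast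
  obtain s2 t2 where s2: "s2 \<in> K" "t2 \<in> K" "(s2,t2) \<in> (snd H)\<^sup>*" "(s2,t2) \<notin> (snd H - {(b,v)})\<^sup>*"
    using essential[OF ab(3)] by blast
  have d2: "(s2,b) \<in> (snd H)\<^sup>*" "(v,t2) \<in> (snd H)\<^sup>*" using decomp[OF s2(3,4)] by auto
  have s2v: "(s2,v) \<in> (snd H)\<^sup>*" using d2(1) ab(3) by (meson rtrancl.rtrancl_into_rtrancl)
  have anv: "a \<noteq> v"
  proof
    assume "a = v" then show False using s1(3,4) loop_free[of s1 t1 "snd H" v] by blast
  qed
  have bnv: "b \<noteq> v"
  proof
    assume "b = v" then show False using s2(3,4) loop_free[of s2 t2 "snd H" v] by blast
  qed
  have s2a: "(s2,a) \<notin> (snd H)\<^sup>*"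
  proof
    assume r: "(s2,a) \<in> (snd H)\<^sup>*"
    have r1: "(s2,a) \<in> (snd H - {(b,v)})\<^sup>*"
    proof (rule ccontr)
      assume "\<not> ?thesis"
      then have "(v,a) \<in> (snd H)\<^sup>*" using decomp[OF r] by blast
      then show False using no_back[OF ab(2) vK anv] by blast
    qed
    have r2: "(v,t2) \<in> (snd H - {(b,v)})\<^sup>*"
    proof (rule ccontr)
      assume "\<not> ?thesis"
      then have "(v,b) \<in> (snd H)\<^sup>*" using decomp[OF d2(2)] by blast
      then show False using no_back[OF ab(3) vK bnv] by blast
    qed
    have "(a,v) \<in> snd H - {(b,v)}" using ab by auto
    then have "(s2,t2) \<in> (snd H - {(b,v)})\<^sup>*" using r1 r2
      by (meson rtrancl.rtrancl_into_rtrancl rtrancl_trans)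
    then show False using s2(4) by blast
  qed
  show ?thesis
    using ab(2) s1 s2v s2a s2(1) by (intro bexI[where x="(s1,s2,t1)"]) auto
qed

end

lemma inj_charge:
  assumes a: "(a,v)\<in>E" "(s1,t)\<in>E\<^sup>*" "(s1,t)\<notin>(E-{(a,v)})\<^sup>*" "(s2,v)\<in>E\<^sup>*" "(s2,a)\<notin>E\<^sup>*"
    and b: "(a',v')\<in>E" "(s1,t)\<in>E\<^sup>*" "(s1,t)\<notin>(E-{(a',v')})\<^sup>*" "(s2,v')\<in>E\<^sup>*" "(s2,a')\<notin>E\<^sup>*"
  shows "v = v'"
proof (rule ccontr)
  assume vv: "v \<noteq> v'"
  have d: "(s1,a) \<in> E\<^sup>*" "(v,t) \<in> E\<^sup>*" using decomp[OF a(2,3)] by auto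
  show False
  proof (cases "(s1,a) \<in> (E-{(a',v')})\<^sup>* \<and> (v,t) \<in> (E-{(a',v')})\<^sup>*")
    case True
    have "(a,v) \<in> E-{(a',v')}" using a(1) vv by auto
    then have "(s1,t) \<in> (E-{(a',v')})\<^sup>*" using True
      by (meson rtrancl.rtrancl_into_rtrancl rtrancl_trans)
    then show False using b(3) by blast
  next
    case False
    then have "(s1,a) \<notin> (E-{(a',v')})\<^sup>* \<or> (v,t) \<notin> (E-{(a',v')})\<^sup>*" by blast
    then show False
    proof
      assume "(s1,a) \<notin> (E-{(a',v')})\<^sup>*"
      then have "(v',a) \<in> E\<^sup>*" using decomp[OF d(1)] by blast
      then have "(s2,a) \<in> E\<^sup>*" using b(4) by (meson rtrancl_trans)
      then show False using a(5) by blast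
    next
      assume "(v,t) \<notin> (E-{(a',v')})\<^sup>*"
      then have "(v,a') \<in> E\<^sup>*" using decomp[OF d(2)] by blast
      then have "(s2,a') \<in> E\<^sup>*" using a(4) by (meson rtrancl_trans)
      then show False using b(5) by blast
    qed
  qed
qed

lemma (in minH) bound: "card (fst H - K) \<le> card K ^ 3"
proof -
  define Q where "Q = (\<lambda>v tr. \<exists>a. (a,v) \<in> snd H \<and> (fst tr, snd (snd tr)) \<in> (snd H)\<^sup>* \<and>
     (fst tr, snd (snd tr)) \<notin> (snd H - {(a,v)})\<^sup>* \<and> (fst (snd tr), v) \<in> (snd H)\<^sup>* \<and>
     (fst (snd tr), a) \<notin> (snd H)\<^sup>*)"
  have "\<forall>v\<in>fst H - K. \<exists>tr\<in>K\<times>K\<times>K. Q v tr" using charge unfolding Q_def by blast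
  then obtain g where g: "\<And>v. v \<in> fst H - K \<Longrightarrow> g v \<in> K\<times>K\<times>K \<and> Q v (g v)"
    by metis
  have inj: "inj_on g (fst H - K)"
  proof (rule inj_onI)
    fix v v' assume v: "v \<in> fst H - K" and v': "v' \<in> fst H - K" and eq: "g v = g v'"
    obtain s1 s2 t where gt: "g v = (s1,s2,t)" by (cases "g v") auto
    have q1: "Q v (s1,s2,t)" using g[OF v] gt by simp
    have q2: "Q v' (s1,s2,t)" using g[OF v'] gt eq by simp
    from q1 obtain a where A: "(a,v) \<in> snd H" "(s1,t) \<in> (snd H)\<^sup>*" "(s1,t) \<notin> (snd H - {(a,v)})\<^sup>*"
      "(s2,v) \<in> (snd H)\<^sup>*" "(s2,a) \<notin> (snd H)\<^sup>*" unfolding Q_def by auto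
    from q2 obtain a' where B: "(a',v') \<in> snd H" "(s1,t) \<in> (snd H)\<^sup>*" "(s1,t) \<notin> (snd H - {(a',v')})\<^sup>*"
      "(s2,v') \<in> (snd H)\<^sup>*" "(s2,a') \<notin> (snd H)\<^sup>*" unfolding Q_def by auto
    show "v = v'" using inj_charge[OF A B] .
  qed
  have finK: "finite K" using KH finV finite_subset by blast
  have "g ` (fst H - K) \<subseteq> K\<times>K\<times>K" using g by blast
  then have "card (fst H - K) \<le> card (K\<times>K\<times>K)"
    using card_inj_on_le[OF inj] finK by blast
  also have "\<dots> = card K ^ 3" by (simp add: card_cartesian_product power3_eq_cube)
  finally show ?thesis .
qed

theorem theorem1p1:
  "\<exists>c::nat. \<forall>(G::digraph) (K::nat set).
     wf_digraph G \<and> K \<subseteq> fst G \<longrightarrow>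
     (\<exists>H. is_RPM K H G \<and> RPM_size K H \<le> c * (card K) ^ 3)"
proof (intro exI[of _ 1] allI impI)
  fix G :: digraph and K :: "nat set"
  assume asm: "wf_digraph G \<and> K \<subseteq> fst G"
  let ?P = "\<lambda>H. is_RPM K H G \<and> wf_digraph H"
  have PG: "?P G" using asm by (simp add: is_RPM_def is_minor_def)
  obtain H where PH: "?P H" and least: "\<And>H'. ?P H' \<Longrightarrow> sz H \<le> sz H'"
    using ex_has_least_nat[of ?P G sz] PG by blast
  have "minH K H"
  proof
    show "wf_digraph H" using PH by simp
    show "K \<subseteq> fst H" using PH by (simp add: is_RPM_def)
    fix H' assume st: "minor_step K H H'" and KH': "K \<subseteq> fst H'"
      and re: "\<forall>x\<in>K. \<forall>y\<in>K. reach H' x y \<longleftrightarrow> reach H x y"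
    have "is_minor K H' G" using PH st unfolding is_RPM_def is_minor_def
      by (meson rtranclp.rtrancl_into_rtrancl)
    moreover have "wf_digraph H'" using step_wf[OF st] PH by blast
    ultimately have "?P H'" using KH' re PH by (simp add: is_RPM_def)
    then show "sz H \<le> sz H'" using least by blast
  qed
  then have "card (fst H - K) \<le> card K ^ 3" by (rule minH.bound)
  then show "\<exists>H. is_RPM K H G \<and> RPM_size K H \<le> 1 * card K ^ 3"
    using PH by (intro exI[of _ H]) (simp add: RPM_size_def)
qed

end
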